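(* Let $N$ be even. Let $\rho_0=\sum_{n=1}^Np_n|n\rangle\langle n|$ be a full-rank density matrix on $\mathbb{C}^N$, and let $G$ be a Hermitian operator with $\langle n|G|m\rangle\in\mathbb{R}$ for all $n,m$. Let $\rho_\lambda=e^{-i\lambda G}\rho_0e^{i\lambda G}$, and let $L_0$ be its symmetric logarithmic derivative at $\lambda=0$. Assume $L_0$ is full rank. Then: (3.1) $L_0$ is diagonal in an orthonormal basis $\{|\alpha_{i,k}\rangle: i=\pm,\ k=1,\dots,N/2\}$ whose eigenvalues are opposite in pairs: $L_0|\alpha_{\pm,k}\rangle=\pm\alpha_{+,k}|\alpha_{\pm,k}\rangle$ with $\alpha_{+,k}\in\mathbb{R}\setminus\{0\}$. (3.2) Let $V:\mathbb{C}^N\to\mathbb{C}^2\otimes\mathbb{C}^{N/2}$ be the unitary defined by $V|\alpha_{i,k}\rangle=|i\rangle\otimes|k\rangle$. Here $\{|+\rangle,|-\rangle\}$ is the eigenbasis of a Pauli operator $S_y$ on $\mathbb{C}^2$ with $S_y|\pm\rangle=\pm|\pm\rangle$, and $\{|k\rangle\}$ is an orthonormal basis of $\mathbb{C}^{N/2}$. Under this factorization $\mathcal{H}_N\cong\mathcal{H}_2\otimes\mathcal{H}_{N/2}$, the SLD takes the product form $$VL_0V^\dagger=S_y\otimes\sum_{k=1}^{N/2}\alpha_{+,k}\,\Pi_k,\qquad \Pi_k=|k\rangle\langle k|.$$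
   Context: The symmetric logarithmic derivative $L_0$ is the Hermitian operator satisfying $\partial_\lambda\rho_\lambda|_{\lambda=0}=-i[G,\rho_0]=(\rho_0L_0+L_0\rho_0)/2$; it is unique because $\rho_0$ is full rank. *)

theory Defs
  imports "Jordan_Normal_Form.Schur_Decomposition"
begin

definition diag_state :: "nat \<Rightarrow> (nat \<Rightarrow> real) \<Rightarrow> complex mat" where
  "diag_state N p = mat N N (\<lambda>(i,j). if i = j then complex_of_real (p i) else 0)"

(* Symmetric logarithmic derivative of rho_lambda = exp(-i lambda G) rho0 exp(i lambda G)
   at lambda = 0:  Hermitian L with -i[G,rho0] = (rho0 L + L rho0)/2. *)
definition is_SLD :: "nat \<Rightarrow> complex mat \<Rightarrow> complex mat \<Rightarrow> complex mat \<Rightarrow> bool" where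
  "is_SLD N G rho0 L \<longleftrightarrow> L \<in> carrier_mat N N \<and> mat_adjoint L = L \<and>
     (- \<i>) \<cdot>\<^sub>m (G * rho0 - rho0 * G) = (1/2 :: complex) \<cdot>\<^sub>m (rho0 * L + L * rho0)"

definition S_y :: "complex mat" where
  "S_y = mat 2 2 (\<lambda>(i,j). if i = 0 \<and> j = 1 then - \<i> else if i = 1 \<and> j = 0 then \<i> else 0)"

(* Kronecker (tensor) products; C^a \<otimes> C^b identified with C^(a*b) via (i,k) \<mapsto> i*b + k *)
definition kron_vec :: "complex vec \<Rightarrow> complex vec \<Rightarrow> complex vec" where
  "kron_vec u w = vec (dim_vec u * dim_vec w)
     (\<lambda>j. u $ (j div dim_vec w) * w $ (j mod dim_vec w))"

definition kron_mat :: "complex mat \<Rightarrow> complex mat \<Rightarrow> complex mat" where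
  "kron_mat A B = mat (dim_row A * dim_row B) (dim_col A * dim_col B)
     (\<lambda>(r,c). A $$ (r div dim_row B, c div dim_col B) * B $$ (r mod dim_row B, c mod dim_col B))"

definition outer :: "complex vec \<Rightarrow> complex vec \<Rightarrow> complex mat" where
  "outer u v = mat (dim_vec u) (dim_vec v) (\<lambda>(r,c). u $ r * cnj (v $ c))"

definition mat_sum :: "nat \<Rightarrow> nat set \<Rightarrow> (nat \<Rightarrow> complex mat) \<Rightarrow> complex mat" where
  "mat_sum m K f = mat m m (\<lambda>(r,c). \<Sum>k\<in>K. f k $$ (r,c))"

definition unitary_mat :: "nat \<Rightarrow> complex mat \<Rightarrow> bool" where
  "unitary_mat n V \<longleftrightarrow> V \<in> carrier_mat n n \<and> mat_adjoint V * V = 1\<^sub>m n \<and> V * mat_adjoint V = 1\<^sub>m n"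

definition orthonormal_fam :: "nat \<Rightarrow> ('i \<Rightarrow> complex vec) \<Rightarrow> 'i set \<Rightarrow> bool" where
  "orthonormal_fam n v I \<longleftrightarrow> (\<forall>i\<in>I. v i \<in> carrier_vec n) \<and>
     (\<forall>i\<in>I. \<forall>j\<in>I. v j \<bullet>c v i = (if i = j then 1 else 0))"

end

theory Submission
  imports Defs "Jordan_Normal_Form.Spectral_Radius"
begin

lemma adj_dims[simp]: "dim_row (mat_adjoint A) = dim_col A" "dim_col (mat_adjoint A) = dim_row A"
  unfolding mat_adjoint_def by auto
lemma adj_index[simp]: assumes "i < dim_col A" "j < dim_row A"
  shows "mat_adjoint A $$ (i,j) = conjugate (A $$ (j,i))"
proof -
  have "mat_adjoint A $$ (i,j) = (map conjugate (cols A) ! i) $ j"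
    unfolding mat_adjoint_def mat_of_rows_def using assms by (subst index_mat) auto
  also have "\<dots> = conjugate (col A i) $ j" using assms by simp
  also have "\<dots> = conjugate (A $$ (j,i))" using assms by simp
  finally show ?thesis .
qed
lemma adj_carrier[simp]: "A \<in> carrier_mat n m \<Longrightarrow> mat_adjoint A \<in> carrier_mat m n"
  by (rule carrier_matI) (auto dest: carrier_matD)

lemma cprod_sum: "(x::complex vec) \<in> carrier_vec n \<Longrightarrow> y \<in> carrier_vec n \<Longrightarrow>
   x \<bullet>c y = (\<Sum>i<n. x$i * cnj (y$i))"
  by (simp add: scalar_prod_def atLeast0LessThan)

lemma mv_index: "A \<in> carrier_mat n m \<Longrightarrow> (x::complex vec) \<in> carrier_vec m \<Longrightarrow> i < n \<Longrightarrow>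
   (A *\<^sub>v x) $ i = (\<Sum>k<m. A$$(i,k) * x$k)"
  by (simp add: scalar_prod_def atLeast0LessThan row_def)

lemma row_sprod: "A \<in> carrier_mat n m \<Longrightarrow> (x::complex vec) \<in> carrier_vec m \<Longrightarrow> i < n \<Longrightarrow>
   row A i \<bullet> x = (\<Sum>k<m. A$$(i,k) * x$k)"
  by (simp add: scalar_prod_def atLeast0LessThan row_def)

lemma cnj_cprod: "(x::complex vec) \<in> carrier_vec n \<Longrightarrow> y \<in> carrier_vec n \<Longrightarrow>
   cnj (x \<bullet>c y) = y \<bullet>c x"
  by (simp add: cprod_sum mult.commute)

lemma adj_cprod:
  assumes A: "A \<in> carrier_mat n m" and x: "(x::complex vec) \<in> carrier_vec m" and y: "y \<in> carrier_vec n"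
  shows "(A *\<^sub>v x) \<bullet>c y = x \<bullet>c (mat_adjoint A *\<^sub>v y)"
proof -
  have "(A *\<^sub>v x) \<bullet>c y = (\<Sum>i<n. (A *\<^sub>v x)$i * cnj (y$i))"
    by (rule cprod_sum) (use A x y in auto)
  also have "\<dots> = (\<Sum>i<n. (\<Sum>k<m. A$$(i,k) * x$k) * cnj (y$i))"
    using A x by (auto simp: row_sprod intro!: sum.cong)
  also have "\<dots> = (\<Sum>i<n. \<Sum>k<m. x$k * cnj (cnj (A$$(i,k)) * y$i))"
    by (simp add: sum_distrib_left sum_distrib_right mult_ac)
  also have "\<dots> = (\<Sum>k<m. \<Sum>i<n. x$k * cnj (cnj (A$$(i,k)) * y$i))"
    by (rule sum.swap)
  also have "\<dots> = (\<Sum>k<m. x$k * cnj (\<Sum>i<n. cnj (A$$(i,k)) * y$i))"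
    by (simp add: sum_distrib_left)
  also have "\<dots> = (\<Sum>k<m. x$k * cnj ((mat_adjoint A *\<^sub>v y)$k))"
    using A y by (auto simp: row_sprod[OF adj_carrier[OF A] y] intro!: sum.cong)
  also have "\<dots> = x \<bullet>c (mat_adjoint A *\<^sub>v y)"
    by (rule cprod_sum[symmetric, OF x mult_mat_vec_carrier[OF adj_carrier[OF A] y]])
  finally show ?thesis .
qed

lemma herm_cprod:
  assumes A: "A \<in> carrier_mat n n" and h: "mat_adjoint A = A"
    and x: "(x::complex vec) \<in> carrier_vec n" and y: "y \<in> carrier_vec n"
  shows "(A *\<^sub>v x) \<bullet>c y = x \<bullet>c (A *\<^sub>v y)"
  using adj_cprod[OF A x y] h by simp

lemma eig_orth:
  assumes A: "A \<in> carrier_mat n n" and h: "mat_adjoint A = A"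
    and x: "(x::complex vec) \<in> carrier_vec n" and y: "y \<in> carrier_vec n"
    and ex: "A *\<^sub>v x = complex_of_real a \<cdot>\<^sub>v x" and ey: "A *\<^sub>v y = complex_of_real b \<cdot>\<^sub>v y"
    and ab: "a \<noteq> b"
  shows "x \<bullet>c y = 0"
proof -
  have "(A *\<^sub>v x) \<bullet>c y = complex_of_real a * (x \<bullet>c y)" using x y ex by simp
  moreover have "x \<bullet>c (A *\<^sub>v y) = complex_of_real b * (x \<bullet>c y)" using x y ey
    by (simp add: cprod_sum sum_distrib_left mult_ac)
  ultimately have "complex_of_real a * (x \<bullet>c y) = complex_of_real b * (x \<bullet>c y)"
    using herm_cprod[OF A h x y] by metis
  hence "(complex_of_real a - complex_of_real b) * (x \<bullet>c y) = 0" by (simp add: algebra_simps)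
  moreover have "complex_of_real a - complex_of_real b \<noteq> 0" using ab by simp
  ultimately show ?thesis by simp
qed

lemma conj_cprod_conj: "(x::complex vec) \<in> carrier_vec n \<Longrightarrow> y \<in> carrier_vec n \<Longrightarrow>
   conjugate x \<bullet>c conjugate y = cnj (x \<bullet>c y)"
  by (auto simp: scalar_prod_def atLeast0LessThan cnj_sum intro!: sum.cong)

lemma smult_cprod: "(x::complex vec) \<in> carrier_vec n \<Longrightarrow> y \<in> carrier_vec n \<Longrightarrow>
   (a \<cdot>\<^sub>v x) \<bullet>c (b \<cdot>\<^sub>v y) = a * cnj b * (x \<bullet>c y)"
  by (simp add: cprod_sum sum_distrib_left mult_ac)

lemma W_cprod:
  assumes W: "W \<in> carrier_mat n n" and WHW: "mat_adjoint W * W = 1\<^sub>m n"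
    and x: "(x::complex vec) \<in> carrier_vec n" and y: "y \<in> carrier_vec n"
  shows "(W *\<^sub>v x) \<bullet>c (W *\<^sub>v y) = x \<bullet>c y"
proof -
  have "(W *\<^sub>v x) \<bullet>c (W *\<^sub>v y) = x \<bullet>c (mat_adjoint W *\<^sub>v (W *\<^sub>v y))"
    using adj_cprod[OF W x] W y by simp
  also have "mat_adjoint W *\<^sub>v (W *\<^sub>v y) = (mat_adjoint W * W) *\<^sub>v y"
    using W y by (simp add: assoc_mult_mat_vec[symmetric, of _ n n _ n])
  finally show ?thesis using WHW y by simp
qed

lemma cprod_vCons: "(x::complex vec) \<in> carrier_vec m \<Longrightarrow> y \<in> carrier_vec m \<Longrightarrow>
   vCons a x \<bullet>c vCons b y = a * cnj b + x \<bullet>c y"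
  by (simp add: cprod_sum[of _ "Suc m"] cprod_sum[of _ m] sum.lessThan_Suc_shift)

lemma unit0_vCons: "unit_vec (Suc m) 0 = vCons (1::complex) (0\<^sub>v m)"
  by (rule eq_vecI) (auto simp: vec_index_vCons split: nat.split)

lemma cprod_unit0_vCons: "(x::complex vec) \<in> carrier_vec m \<Longrightarrow>
   unit_vec (Suc m) 0 \<bullet>c vCons 0 x = 0" "(x::complex vec) \<in> carrier_vec m \<Longrightarrow> vCons 0 x \<bullet>c unit_vec (Suc m) 0 = 0"
   "unit_vec (Suc m) 0 \<bullet>c (unit_vec (Suc m) 0 :: complex vec) = 1"
  by (simp_all add: unit0_vCons cprod_vCons[of _ m] cprod_sum[of _ m])

lemma normalize_cprod:
  assumes x: "(x::complex vec) \<in> carrier_vec n" and x0: "x \<bullet>c x \<noteq> 0"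
  defines "c \<equiv> 1 / complex_of_real (sqrt (Re (x \<bullet>c x)))"
  shows "(c \<cdot>\<^sub>v x) \<bullet>c (c \<cdot>\<^sub>v x) = 1"
proof -
  have ge: "0 \<le> x \<bullet>c x" by (rule conjugate_square_ge_0_vec)
  hence im: "Im (x \<bullet>c x) = 0" and re: "Re (x \<bullet>c x) \<ge> 0" unfolding less_eq_complex_def by auto
  define r where "r = Re (x \<bullet>c x)"
  have xr: "x \<bullet>c x = complex_of_real r" by (rule complex_eqI) (simp_all add: r_def im)
  have r0: "r > 0" using re x0 xr unfolding r_def by (metis less_eq_real_def of_real_0)
  have s: "1 / sqrt r * (1 / sqrt r) = 1 / r" using r0
    by (metis abs_of_pos real_sqrt_mult_self times_divide_times_eq mult_1)
  have c: "c = complex_of_real (1 / sqrt r)" unfolding c_def r_def by simp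
  have "(c \<cdot>\<^sub>v x) \<bullet>c (c \<cdot>\<^sub>v x) = c * cnj c * complex_of_real r"
    using smult_cprod[OF x x] xr by simp
  also have "\<dots> = complex_of_real (1 / sqrt r * (1 / sqrt r) * r)" unfolding c by (simp only: complex_cnj_complex_of_real of_real_mult)
  also have "\<dots> = 1" unfolding s using r0 by simp
  finally show ?thesis .
qed

lemma mm_index: "A \<in> carrier_mat n m \<Longrightarrow> B \<in> carrier_mat m k \<Longrightarrow> i < n \<Longrightarrow> j < k \<Longrightarrow>
  (A * B) $$ (i,j) = (\<Sum>r<m. A $$ (i,r) * (B $$ (r,j) :: complex))"
  by (simp add: scalar_prod_def atLeast0LessThan row_def col_def)

lemma smult_cprod_l: "(x::complex vec) \<in> carrier_vec n \<Longrightarrow> y \<in> carrier_vec n \<Longrightarrow>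
   (a \<cdot>\<^sub>v x) \<bullet>c y = a * (x \<bullet>c y)"
  by (simp add: cprod_sum sum_distrib_left mult_ac)

lemma cprod_smult_r: "(x::complex vec) \<in> carrier_vec n \<Longrightarrow> y \<in> carrier_vec n \<Longrightarrow>
   x \<bullet>c (a \<cdot>\<^sub>v y) = cnj a * (x \<bullet>c y)"
  by (simp add: cprod_sum sum_distrib_left mult_ac)

lemma vCons_carrier: "y \<in> carrier_vec m \<Longrightarrow> vCons a y \<in> carrier_vec (Suc m)"
  by (rule carrier_vecI) (auto dest: carrier_vecD)

lemma spectral:
  fixes A :: "complex mat"
  assumes "A \<in> carrier_mat n n" "mat_adjoint A = A"
  shows "\<exists>vs d. (\<forall>j<n. vs j \<in> carrier_vec n \<and> A *\<^sub>v vs j = d j \<cdot>\<^sub>v vs j) \<and>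
     (\<forall>i<n. \<forall>j<n. vs j \<bullet>c vs i = (if i = j then 1 else 0))"
  using assms
proof (induction n arbitrary: A)
  case 0
  then show ?case by auto
next
  case (Suc m)
  define n where "n = Suc m"
  have A: "A \<in> carrier_mat n n" and h: "mat_adjoint A = A" using Suc.prems n_def by auto
  have n0: "n > 0" unfolding n_def by simp
  from spectrum_non_empty[OF A n0] obtain e where "e \<in> spectrum A" by auto
  then obtain v where ev: "eigenvector A v e" unfolding spectrum_def eigenvalue_def by auto
  hence v: "v \<in> carrier_vec n" and v0: "v \<noteq> 0\<^sub>v n" and Av: "A *\<^sub>v v = e \<cdot>\<^sub>v v"
    using A unfolding eigenvector_def by auto
  interpret cof_vec_space n "TYPE(complex)" .
  define b where "b = basis_completion v"
  have b: "set b \<subseteq> carrier_vec n" "distinct b" "\<not> lin_dep (set b)" "length b = n" "hd b = v"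
    using basis_completion[OF v v0] unfolding b_def by auto
  obtain bs where bv: "b = v # bs" using b(4,5) n0 by (cases b) auto
  define ws where "ws = gram_schmidt n b"
  have ws: "corthogonal ws" "set ws \<subseteq> carrier_vec n" "length ws = n"
    using gram_schmidt_result[OF b(1,2,3) ws_def] b(4) by auto
  have hdws: "hd ws = v" unfolding ws_def bv using gram_schmidt_hd[OF v] by simp
  hence ws0: "ws ! 0 = v" using ws(3) n0 by (cases ws) auto
  define c where "c k = 1 / complex_of_real (sqrt (Re (ws!k \<bullet>c ws!k)))" for k
  define w where "w k = c k \<cdot>\<^sub>v (ws ! k)" for k
  have wsc: "ws!k \<in> carrier_vec n" if "k<n" for k using ws that by auto
  have wc: "w k \<in> carrier_vec n" if "k < n" for k unfolding w_def using wsc[OF that] by auto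
  have won: "w j \<bullet>c w i = (if i = j then 1 else 0)" if i: "i<n" and j: "j<n" for i j
  proof (cases "i = j")
    case True
    have "ws!i \<bullet>c ws!i \<noteq> 0" using corthogonalD[OF ws(1), of i i] i ws(3) by auto
    from normalize_cprod[OF wsc[OF i] this] show ?thesis using True unfolding w_def c_def by simp
  next
    case False
    have "ws!j \<bullet>c ws!i = 0" using corthogonalD[OF ws(1), of j i] i j ws(3) False by auto
    then show ?thesis using False smult_cprod[OF wsc[OF j] wsc[OF i]] unfolding w_def by simp
  qed
  have Aw0: "A *\<^sub>v w 0 = e \<cdot>\<^sub>v w 0"
    unfolding w_def ws0 using mult_mat_vec[OF A v] Av by (simp add: smult_smult_assoc mult.commute)
  define W where "W = mat n n (\<lambda>(r,k). w k $ r)"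
  have W: "W \<in> carrier_mat n n" unfolding W_def by simp
  have colW: "col W k = w k" if "k < n" for k
    by (rule eq_vecI) (use wc[OF that] that in \<open>auto simp: W_def\<close>)
  have WHW: "mat_adjoint W * W = 1\<^sub>m n"
  proof (rule eq_matI)
    fix i j assume i: "i < dim_row (1\<^sub>m n :: complex mat)" and j: "j < dim_col (1\<^sub>m n :: complex mat)"
    hence i: "i < n" and j: "j < n" by auto
    have "(mat_adjoint W * W) $$ (i,j) = (\<Sum>r<n. mat_adjoint W $$ (i,r) * W $$ (r,j))"
      by (rule mm_index[OF adj_carrier[OF W] W i j])
    also have "\<dots> = (\<Sum>r<n. cnj (w i $ r) * w j $ r)"
      using W i j by (auto simp: W_def intro!: sum.cong)
    also have "\<dots> = w j \<bullet>c w i" using wc[OF i] wc[OF j] by (simp add: cprod_sum mult.commute)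
    also have "\<dots> = 1\<^sub>m n $$ (i,j)" using won[OF i j] i j by simp
    finally show "(mat_adjoint W * W) $$ (i,j) = 1\<^sub>m n $$ (i,j)" .
  qed (use W in auto)
  have WWH: "W * mat_adjoint W = 1\<^sub>m n"
    by (rule mat_mult_left_right_inverse[OF adj_carrier[OF W] W WHW])
  define A' where "A' = mat_adjoint W * A * W"
  have A'c: "A' \<in> carrier_mat n n" unfolding A'_def using W A by auto
  have A'idx: "A' $$ (i,k) = (A *\<^sub>v w k) \<bullet>c w i" if i: "i<n" and k: "k<n" for i k
  proof -
    have "A' $$ (i,k) = (mat_adjoint W * (A * W)) $$ (i,k)"
      unfolding A'_def using W A by (simp add: assoc_mult_mat[OF adj_carrier[OF W] A W])
    also have "\<dots> = (\<Sum>r<n. cnj (w i $ r) * (A *\<^sub>v w k) $ r)"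
    proof -
      have "(mat_adjoint W * (A * W)) $$ (i,k) = (\<Sum>r<n. mat_adjoint W $$ (i,r) * (A * W) $$ (r,k))"
        by (rule mm_index[OF adj_carrier[OF W] _ i k]) (use A W in auto)
      also have "\<dots> = (\<Sum>r<n. cnj (w i $ r) * (A *\<^sub>v w k) $ r)"
      proof (rule sum.cong[OF refl])
        fix r assume r: "r \<in> {..<n}"
        have "(A * W) $$ (r,k) = (A *\<^sub>v col W k) $ r" using A W r k by simp
        then show "mat_adjoint W $$ (i,r) * (A * W) $$ (r,k) = cnj (w i $ r) * (A *\<^sub>v w k) $ r"
          using W i r k colW[OF k] by (simp add: W_def)
      qed
      finally show ?thesis .
    qed
    also have "\<dots> = (A *\<^sub>v w k) \<bullet>c w i"
      using wc[OF i] wc[OF k] A by (simp add: cprod_sum[OF mult_mat_vec_carrier[OF A wc[OF k]] wc[OF i]] mult.commute)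
    finally show ?thesis .
  qed
  have AW: "A * W = W * A'"
  proof -
    have "W * A' = W * (mat_adjoint W * (A * W))"
      unfolding A'_def using W A by (simp add: assoc_mult_mat[OF adj_carrier[OF W] A W])
    also have "\<dots> = (W * mat_adjoint W) * (A * W)"
      using W A by (simp add: assoc_mult_mat[OF W adj_carrier[OF W], of "A * W" n])
    also have "\<dots> = A * W" using WWH A W by simp
    finally show ?thesis by simp
  qed
  have AWx: "A *\<^sub>v (W *\<^sub>v x) = W *\<^sub>v (A' *\<^sub>v x)" if x: "x \<in> carrier_vec n" for x
  proof -
    have "A *\<^sub>v (W *\<^sub>v x) = (A * W) *\<^sub>v x" using A W x by simp
    also have "\<dots> = (W * A') *\<^sub>v x" unfolding AW ..
    also have "\<dots> = W *\<^sub>v (A' *\<^sub>v x)" using W A'c x by simp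
    finally show ?thesis .
  qed
  have w00: "w 0 \<bullet>c w 0 = 1" using won[OF n0 n0] by simp
  have a00: "A' $$ (0,0) = e" using A'idx[OF n0 n0] Aw0 w00 smult_cprod_l[OF wc[OF n0] wc[OF n0]] by simp
  have ai0: "A' $$ (i,0) = 0" if "0 < i" "i < n" for i
    using A'idx[OF that(2) n0] Aw0 won[OF that(2) n0] that smult_cprod_l[OF wc[OF n0] wc[OF that(2)]] by simp
  have a0k: "A' $$ (0,k) = 0" if "0 < k" "k < n" for k
  proof -
    have "A' $$ (0,k) = w k \<bullet>c (A *\<^sub>v w 0)"
      using A'idx[OF n0 that(2)] herm_cprod[OF A h wc[OF that(2)] wc[OF n0]] by simp
    also have "\<dots> = cnj e * (w k \<bullet>c w 0)" unfolding Aw0 by (rule cprod_smult_r[OF wc[OF that(2)] wc[OF n0]])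
    also have "\<dots> = 0" using won[OF n0 that(2)] that by simp
    finally show ?thesis .
  qed
  define A3 where "A3 = mat m m (\<lambda>(i,j). A' $$ (Suc i, Suc j))"
  have A3c: "A3 \<in> carrier_mat m m" unfolding A3_def by simp
  have A3h: "mat_adjoint A3 = A3"
  proof (rule eq_matI)
    fix i j assume "i < dim_row A3" "j < dim_col A3"
    hence i: "i < m" and j: "j < m" unfolding A3_def by auto
    have si: "Suc i < n" and sj: "Suc j < n" using i j n_def by auto
    have "mat_adjoint A3 $$ (i,j) = cnj ((A *\<^sub>v w (Suc i)) \<bullet>c w (Suc j))"
      using i j A'idx[OF sj si] by (simp add: A3_def)
    also have "\<dots> = w (Suc j) \<bullet>c (A *\<^sub>v w (Suc i))"
      by (rule cnj_cprod[OF mult_mat_vec_carrier[OF A wc[OF si]] wc[OF sj]])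
    also have "\<dots> = (A *\<^sub>v w (Suc j)) \<bullet>c w (Suc i)"
      using herm_cprod[OF A h wc[OF sj] wc[OF si]] by simp
    also have "\<dots> = A3 $$ (i,j)" using i j A'idx[OF si sj] by (simp add: A3_def)
    finally show "mat_adjoint A3 $$ (i,j) = A3 $$ (i,j)" .
  qed (auto simp: A3_def)
  from Suc.IH[OF A3c A3h] obtain ys d' where
    ys: "\<forall>j<m. ys j \<in> carrier_vec m \<and> A3 *\<^sub>v ys j = d' j \<cdot>\<^sub>v ys j"
    and yon: "\<forall>i<m. \<forall>j<m. ys j \<bullet>c ys i = (if i = j then 1 else 0)" by blast
  define xs where "xs j = (if j = 0 then unit_vec n 0 else vCons 0 (ys (j - 1)))" for j
  define vs where "vs j = W *\<^sub>v xs j" for j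
  define d where "d j = (if j = 0 then e else d' (j - 1))" for j
  have xsc: "xs j \<in> carrier_vec n" if "j < n" for j
    using that ys vCons_carrier[of "ys (j - 1)" m 0] unfolding xs_def n_def by auto
  have A'xs: "A' *\<^sub>v xs j = d j \<cdot>\<^sub>v xs j" if j: "j < n" for j
  proof (rule eq_vecI)
    show "dim_vec (A' *\<^sub>v xs j) = dim_vec (d j \<cdot>\<^sub>v xs j)" using A'c xsc[OF j] by simp
    fix i assume "i < dim_vec (d j \<cdot>\<^sub>v xs j)"
    hence i: "i < n" using xsc[OF j] by simp
    have "(A' *\<^sub>v xs j) $ i = (\<Sum>k<n. A' $$ (i,k) * xs j $ k)" by (rule mv_index[OF A'c xsc[OF j] i])
    also have "\<dots> = A' $$ (i,0) * xs j $ 0 + (\<Sum>k<m. A' $$ (i,Suc k) * xs j $ Suc k)"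
      unfolding n_def by (rule sum.lessThan_Suc_shift)
    also have "\<dots> = (d j \<cdot>\<^sub>v xs j) $ i"
    proof (cases "j = 0")
      case True
      have "(\<Sum>k<m. A' $$ (i,Suc k) * xs j $ Suc k) = 0"
        using True n_def by (auto simp: xs_def intro!: sum.neutral)
      moreover have "A' $$ (i,0) * xs j $ 0 = (d j \<cdot>\<^sub>v xs j) $ i"
        using True i n0 a00 ai0[of i] by (auto simp: xs_def d_def)
      ultimately show ?thesis by simp
    next
      case False
      define y where "y = ys (j - 1)"
      have jm: "j - 1 < m" using j False n_def by auto
      have y: "y \<in> carrier_vec m" and Ay: "A3 *\<^sub>v y = d' (j - 1) \<cdot>\<^sub>v y" using ys jm unfolding y_def by auto
      have xj: "xs j = vCons 0 y" using False unfolding xs_def y_def by simp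
      show ?thesis
      proof (cases i)
        case 0
        have "(\<Sum>k<m. A' $$ (i,Suc k) * xs j $ Suc k) = 0"
          using 0 a0k n_def by (auto intro!: sum.neutral)
        then show ?thesis using 0 xj y by simp
      next
        case (Suc i')
        have i': "i' < m" using i Suc n_def by auto
        have "(\<Sum>k<m. A' $$ (i,Suc k) * xs j $ Suc k) = (\<Sum>k<m. A3 $$ (i',k) * y $ k)"
          using Suc i' xj by (auto simp: A3_def intro!: sum.cong)
        also have "\<dots> = (A3 *\<^sub>v y) $ i'" by (rule mv_index[OF A3c y i', symmetric])
        also have "\<dots> = d j * y $ i'" unfolding Ay using i' y False by (simp add: d_def)
        finally show ?thesis using Suc xj y i' by simp
      qed
    qed
    finally show "(A' *\<^sub>v xs j) $ i = (d j \<cdot>\<^sub>v xs j) $ i" .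
  qed
  have "\<forall>j<n. vs j \<in> carrier_vec n \<and> A *\<^sub>v vs j = d j \<cdot>\<^sub>v vs j"
  proof (intro allI impI conjI)
    fix j assume j: "j < n"
    show "vs j \<in> carrier_vec n" unfolding vs_def using W xsc[OF j] by simp
    have "A *\<^sub>v vs j = W *\<^sub>v (d j \<cdot>\<^sub>v xs j)" unfolding vs_def AWx[OF xsc[OF j]] A'xs[OF j] ..
    also have "\<dots> = d j \<cdot>\<^sub>v vs j" unfolding vs_def by (rule mult_mat_vec[OF W xsc[OF j]])
    finally show "A *\<^sub>v vs j = d j \<cdot>\<^sub>v vs j" .
  qed
  moreover have "\<forall>i<n. \<forall>j<n. vs j \<bullet>c vs i = (if i = j then 1 else 0)"
  proof (intro allI impI)
    fix i j assume i: "i < n" and j: "j < n"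
    have "vs j \<bullet>c vs i = xs j \<bullet>c xs i" unfolding vs_def by (rule W_cprod[OF W WHW xsc[OF j] xsc[OF i]])
    also have "\<dots> = (if i = j then 1 else 0)"
    proof (cases i)
      case 0
      show ?thesis
      proof (cases j)
        case 0 then show ?thesis using \<open>i = 0\<close> cprod_unit0_vCons(3)[of m] by (simp add: xs_def n_def)
      next
        case (Suc j')
        then show ?thesis using \<open>i = 0\<close> cprod_unit0_vCons(2)[of "ys j'" m] ys j n_def by (simp add: xs_def)
      qed
    next
      case (Suc i')
      show ?thesis
      proof (cases j)
        case 0 then show ?thesis using Suc cprod_unit0_vCons(1)[of "ys i'" m] ys i n_def by (simp add: xs_def)
      next
        case (Suc j')
        then show ?thesis using \<open>i = Suc i'\<close> cprod_vCons[of "ys j'" m "ys i'" 0 0] ys yon i j n_def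
          by (simp add: xs_def)
      qed
    qed
    finally show "vs j \<bullet>c vs i = (if i = j then 1 else 0)" .
  qed
  ultimately show ?case unfolding n_def by blast
qed

lemma sum_split: fixes g :: "nat \<Rightarrow> 'a::comm_monoid_add" shows "(\<Sum>r<a*b. g r) = (\<Sum>i<a. \<Sum>j<b. g (i*b+j))"
proof -
  have "(\<Sum>j<b. g (i*b+j)) = sum g {i*b..<i*b+b}" for i
    using sum.shift_bounds_nat_ivl[of g 0 "i*b" b] by (simp add: atLeast0LessThan add.commute)
  then show ?thesis by (simp add: sum.nat_group)
qed

lemma adj_adj: "mat_adjoint (mat_adjoint (A::complex mat)) = A"
  by (rule eq_matI) auto

lemma onb_mat:
  assumes uc: "\<forall>k<n. u k \<in> carrier_vec n"
    and uon: "\<forall>i<n. \<forall>j<n. u j \<bullet>c u i = (if i = j then 1 else (0::complex))"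
  defines "U \<equiv> mat n n (\<lambda>(r,k). u k $ r)"
  shows "U \<in> carrier_mat n n" "mat_adjoint U * U = 1\<^sub>m n" "U * mat_adjoint U = 1\<^sub>m n"
    "\<And>k. k < n \<Longrightarrow> col U k = u k"
proof -
  show U: "U \<in> carrier_mat n n" unfolding U_def by simp
  show colU: "\<And>k. k < n \<Longrightarrow> col U k = u k"
    by (rule eq_vecI) (use uc in \<open>auto simp: U_def\<close>)
  show UHU: "mat_adjoint U * U = 1\<^sub>m n"
  proof (rule eq_matI)
    fix i j assume i: "i < dim_row (1\<^sub>m n :: complex mat)" and j: "j < dim_col (1\<^sub>m n :: complex mat)"
    hence i: "i < n" and j: "j < n" by auto
    have "(mat_adjoint U * U) $$ (i,j) = (\<Sum>r<n. mat_adjoint U $$ (i,r) * U $$ (r,j))"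
      by (rule mm_index[OF adj_carrier[OF U] U i j])
    also have "\<dots> = (\<Sum>r<n. cnj (u i $ r) * u j $ r)"
      using U i j by (auto simp: U_def intro!: sum.cong)
    also have "\<dots> = u j \<bullet>c u i" using uc i j cprod_sum[of "u j" n "u i"] by (simp add: mult.commute)
    also have "\<dots> = 1\<^sub>m n $$ (i,j)" using uon i j by simp
    finally show "(mat_adjoint U * U) $$ (i,j) = 1\<^sub>m n $$ (i,j)" .
  qed (use U in auto)
  show "U * mat_adjoint U = 1\<^sub>m n"
    by (rule mat_mult_left_right_inverse[OF adj_carrier[OF U] U UHU])
qed

lemma parseval:
  assumes uc: "\<forall>k<n. u k \<in> carrier_vec n"
    and uon: "\<forall>i<n. \<forall>j<n. u j \<bullet>c u i = (if i = j then 1 else (0::complex))"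
    and x: "x \<in> carrier_vec n"
  shows "(\<Sum>k<n. (x \<bullet>c u k) * cnj (x \<bullet>c u k)) = x \<bullet>c x"
proof -
  define U where "U = mat n n (\<lambda>(r,k). u k $ r)"
  note O = onb_mat[OF uc uon, folded U_def]
  have U: "U \<in> carrier_mat n n" by (rule O(1))
  have UHx: "(mat_adjoint U *\<^sub>v x) $ k = x \<bullet>c u k" if k: "k < n" for k
  proof -
    have "(mat_adjoint U *\<^sub>v x) $ k = (\<Sum>r<n. mat_adjoint U $$ (k,r) * x $ r)"
      by (rule mv_index[OF adj_carrier[OF U] x k])
    also have "\<dots> = (\<Sum>r<n. x $ r * cnj (u k $ r))"
      using k U by (auto simp: U_def mult.commute intro!: sum.cong)
    also have "\<dots> = x \<bullet>c u k" using x uc k by (simp add: cprod_sum)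
    finally show ?thesis .
  qed
  have "(\<Sum>k<n. (x \<bullet>c u k) * cnj (x \<bullet>c u k)) = (mat_adjoint U *\<^sub>v x) \<bullet>c (mat_adjoint U *\<^sub>v x)"
    using UHx U x by (simp add: cprod_sum[OF mult_mat_vec_carrier[OF adj_carrier[OF U] x] mult_mat_vec_carrier[OF adj_carrier[OF U] x]])
  also have "\<dots> = x \<bullet>c x"
  proof (rule W_cprod[OF adj_carrier[OF U] _ x x])
    show "mat_adjoint (mat_adjoint U) * mat_adjoint U = 1\<^sub>m n" using O(3) by (simp add: adj_adj)
  qed
  finally show ?thesis .
qed

definition OS :: "nat \<Rightarrow> 'i set \<Rightarrow> ('i \<Rightarrow> complex vec) \<Rightarrow> ('i \<Rightarrow> complex vec) \<Rightarrow> complex mat" where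
  "OS n I g h = mat n n (\<lambda>(r,c). \<Sum>i\<in>I. g i $ r * cnj (h i $ c))"

lemma OS_carrier: "OS n I g h \<in> carrier_mat n n" unfolding OS_def by simp

lemma OS_mult:
  assumes hc: "\<forall>i\<in>I. h i \<in> carrier_vec n" and x: "x \<in> carrier_vec n"
  shows "OS n I g h *\<^sub>v x = vec n (\<lambda>r. \<Sum>i\<in>I. g i $ r * (x \<bullet>c h i))"
proof (rule eq_vecI)
  fix r assume "r < dim_vec (vec n (\<lambda>r. \<Sum>i\<in>I. g i $ r * (x \<bullet>c h i)))"
  hence r: "r < n" by simp
  have "(OS n I g h *\<^sub>v x) $ r = (\<Sum>c<n. (\<Sum>i\<in>I. g i $ r * cnj (h i $ c)) * x $ c)"
    using mv_index[OF OS_carrier x r] r by (simp add: OS_def)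
  also have "\<dots> = (\<Sum>c<n. \<Sum>i\<in>I. g i $ r * (x $ c * cnj (h i $ c)))"
    by (simp add: sum_distrib_left sum_distrib_right mult_ac)
  also have "\<dots> = (\<Sum>i\<in>I. \<Sum>c<n. g i $ r * (x $ c * cnj (h i $ c)))"
    by (rule sum.swap)
  also have "\<dots> = (\<Sum>i\<in>I. g i $ r * (x \<bullet>c h i))"
    using hc x by (auto simp: cprod_sum sum_distrib_left intro!: sum.cong)
  finally show "(OS n I g h *\<^sub>v x) $ r = vec n (\<lambda>r. \<Sum>i\<in>I. g i $ r * (x \<bullet>c h i)) $ r" using r by simp
qed (simp add: OS_def)

lemma OS_basis:
  assumes fin: "finite I" and hc: "\<forall>i\<in>I. h i \<in> carrier_vec n" and gc: "\<forall>i\<in>I. g i \<in> carrier_vec n"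
    and hon: "\<forall>i\<in>I. \<forall>j\<in>I. h j \<bullet>c h i = (if i = j then 1 else 0)" and j: "j \<in> I"
  shows "OS n I g h *\<^sub>v h j = g j"
proof -
  have "OS n I g h *\<^sub>v h j = vec n (\<lambda>r. \<Sum>i\<in>I. g i $ r * (h j \<bullet>c h i))"
    using OS_mult[OF hc] hc j by auto
  also have "\<dots> = vec n (\<lambda>r. g j $ r)"
  proof -
    have "(\<Sum>i\<in>I. g i $ r * (h j \<bullet>c h i)) = g j $ r" for r
    proof -
      have "(\<Sum>i\<in>I. g i $ r * (h j \<bullet>c h i)) = (\<Sum>i\<in>I. if i = j then g j $ r else 0)"
        by (rule sum.cong) (use hon j in auto)
      also have "\<dots> = g j $ r" using fin j by simp
      finally show ?thesis .
    qed
    thus ?thesis by simp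
  qed
  also have "\<dots> = g j" by (rule eq_vecI) (use gc j in auto)
  finally show ?thesis .
qed

lemma OS_adj: "mat_adjoint (OS n I g h) = OS n I h g"
  by (rule eq_matI) (auto simp: OS_def mult.commute)

lemma onb_ext:
  assumes fin: "finite I" and card: "card I = n"
    and uc: "\<forall>i\<in>I. u i \<in> carrier_vec n"
    and uon: "\<forall>i\<in>I. \<forall>j\<in>I. u j \<bullet>c u i = (if i = j then 1 else (0::complex))"
    and X: "X \<in> carrier_mat n n" and Y: "Y \<in> carrier_mat n n"
    and eq: "\<forall>i\<in>I. X *\<^sub>v u i = Y *\<^sub>v u i"
  shows "X = Y"
proof -
  obtain \<phi> where \<phi>: "bij_betw \<phi> {0..<n} I" using ex_bij_betw_nat_finite[OF fin] card by auto
  define u' where "u' k = u (\<phi> k)" for k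
  have \<phi>I: "k < n \<Longrightarrow> \<phi> k \<in> I" for k using \<phi> by (auto simp: bij_betw_def)
  have \<phi>inj: "k < n \<Longrightarrow> l < n \<Longrightarrow> \<phi> k = \<phi> l \<Longrightarrow> k = l" for k l
    using \<phi> by (auto simp: bij_betw_def inj_on_def)
  have u'c: "\<forall>k<n. u' k \<in> carrier_vec n" using uc \<phi>I by (auto simp: u'_def)
  have u'on: "\<forall>i<n. \<forall>j<n. u' j \<bullet>c u' i = (if i = j then 1 else 0)"
    using uon \<phi>I \<phi>inj by (auto simp: u'_def)
  define U where "U = mat n n (\<lambda>(r,k). u' k $ r)"
  note O = onb_mat[OF u'c u'on, folded U_def]
  have XU: "X * U = Y * U"
  proof (rule eq_matI)
    fix i j assume "i < dim_row (Y * U)" "j < dim_col (Y * U)"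
    hence i: "i < n" and j: "j < n" using Y O(1) by auto
    have "(X * U) $$ (i,j) = (X *\<^sub>v col U j) $ i" using X O(1) i j by simp
    also have "\<dots> = (Y *\<^sub>v col U j) $ i" using O(4)[OF j] eq \<phi>I[OF j] by (simp add: u'_def)
    also have "\<dots> = (Y * U) $$ (i,j)" using Y O(1) i j by simp
    finally show "(X * U) $$ (i,j) = (Y * U) $$ (i,j)" .
  qed (use X Y O(1) in auto)
  have "X = (X * U) * mat_adjoint U" using X O(1) O(3) by (simp add: assoc_mult_mat[OF X O(1) adj_carrier[OF O(1)]])
  also have "\<dots> = (Y * U) * mat_adjoint U" unfolding XU ..
  also have "\<dots> = Y" using Y O(1) O(3) by (simp add: assoc_mult_mat[OF Y O(1) adj_carrier[OF O(1)]])
  finally show ?thesis .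
qed

lemma divmod_aux: "j < (b::nat) \<Longrightarrow> (i*b+j) div b = i" "j < (b::nat) \<Longrightarrow> (i*b+j) mod b = j"
  by simp_all

lemma kron_carrier: "u \<in> carrier_vec a \<Longrightarrow> w \<in> carrier_vec b \<Longrightarrow> kron_vec u w \<in> carrier_vec (a*b)"
  unfolding kron_vec_def by (rule carrier_vecI) (auto dest: carrier_vecD)

lemma kron_index: "u \<in> carrier_vec a \<Longrightarrow> w \<in> carrier_vec b \<Longrightarrow> i < a \<Longrightarrow> j < b \<Longrightarrow>
   kron_vec u w $ (i*b+j) = u $ i * w $ j"
proof -
  assume u: "u \<in> carrier_vec a" and w: "w \<in> carrier_vec b" and i: "i < a" and j: "j < b"
  have "i*b+j < a*b"
  proof -
    have "i*b+j < i*b+b" using j by simp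
    also have "\<dots> = (Suc i)*b" by simp
    also have "\<dots> \<le> a*b" using i by (intro mult_le_mono1) simp
    finally show ?thesis .
  qed
  then show ?thesis using u w j unfolding kron_vec_def by (auto dest!: carrier_vecD)
qed

lemma kron_cprod:
  assumes u: "(u::complex vec) \<in> carrier_vec a" and u': "u' \<in> carrier_vec a"
    and w: "w \<in> carrier_vec b" and w': "w' \<in> carrier_vec b"
  shows "kron_vec u w \<bullet>c kron_vec u' w' = (u \<bullet>c u') * (w \<bullet>c w')"
proof -
  have "kron_vec u w \<bullet>c kron_vec u' w' = (\<Sum>r<a*b. kron_vec u w $ r * cnj (kron_vec u' w' $ r))"
    by (rule cprod_sum[OF kron_carrier[OF u w] kron_carrier[OF u' w']])
  also have "\<dots> = (\<Sum>i<a. \<Sum>j<b. kron_vec u w $ (i*b+j) * cnj (kron_vec u' w' $ (i*b+j)))"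
    by (rule sum_split)
  also have "\<dots> = (\<Sum>i<a. \<Sum>j<b. (u $ i * cnj (u' $ i)) * (w $ j * cnj (w' $ j)))"
    by (rule sum.cong[OF refl], rule sum.cong[OF refl]) (simp add: kron_index[OF u w] kron_index[OF u' w'] mult_ac)
  also have "\<dots> = (\<Sum>i<a. u $ i * cnj (u' $ i)) * (\<Sum>j<b. w $ j * cnj (w' $ j))"
    by (simp add: sum_product)
  also have "\<dots> = (u \<bullet>c u') * (w \<bullet>c w')" using u u' w w' by (simp add: cprod_sum)
  finally show ?thesis .
qed

lemma kron_mat_index: "A \<in> carrier_mat a a \<Longrightarrow> B \<in> carrier_mat b b \<Longrightarrow> i < a \<Longrightarrow> j < b \<Longrightarrow> k < a \<Longrightarrow> l < b \<Longrightarrow>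
   kron_mat A B $$ (i*b+j, k*b+l) = A $$ (i,k) * B $$ (j,l)"
proof -
  assume A: "A \<in> carrier_mat a a" and B: "B \<in> carrier_mat b b" and i: "i < a" and j: "j < b"
    and k: "k < a" and l: "l < b"
  have lt: "x*b+y < a*b" if "x < a" "y < b" for x y
  proof -
    have "x*b+y < x*b+b" using that by simp
    also have "\<dots> = (Suc x)*b" by simp
    also have "\<dots> \<le> a*b" using that by (intro mult_le_mono1) simp
    finally show ?thesis .
  qed
  show ?thesis using A B lt[OF i j] lt[OF k l] j l unfolding kron_mat_def by (auto dest!: carrier_matD)
qed

lemma kron_mat_carrier: "A \<in> carrier_mat a a \<Longrightarrow> B \<in> carrier_mat b b \<Longrightarrow> kron_mat A B \<in> carrier_mat (a*b) (a*b)"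
  unfolding kron_mat_def by (rule carrier_matI) (auto dest: carrier_matD)

lemma kron_mat_vec:
  assumes A: "A \<in> carrier_mat a a" and B: "B \<in> carrier_mat b b"
    and u: "(u::complex vec) \<in> carrier_vec a" and w: "w \<in> carrier_vec b"
  shows "kron_mat A B *\<^sub>v kron_vec u w = kron_vec (A *\<^sub>v u) (B *\<^sub>v w)"
proof (rule eq_vecI)
  have Au: "A *\<^sub>v u \<in> carrier_vec a" and Bw: "B *\<^sub>v w \<in> carrier_vec b" using A B u w by auto
  show "dim_vec (kron_mat A B *\<^sub>v kron_vec u w) = dim_vec (kron_vec (A *\<^sub>v u) (B *\<^sub>v w))"
    using kron_mat_carrier[OF A B] kron_carrier[OF Au Bw] by auto
  fix r assume "r < dim_vec (kron_vec (A *\<^sub>v u) (B *\<^sub>v w))"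
  hence r: "r < a*b" using kron_carrier[OF Au Bw] by auto
  hence b0: "b > 0" by (cases b) auto
  define i where "i = r div b"
  define j where "j = r mod b"
  have j: "j < b" unfolding j_def using b0 by simp
  have i: "i < a" unfolding i_def using r by (simp add: less_mult_imp_div_less)
  have rij: "r = i*b+j" unfolding i_def j_def by simp
  have "(kron_mat A B *\<^sub>v kron_vec u w) $ r = (\<Sum>c<a*b. kron_mat A B $$ (r,c) * kron_vec u w $ c)"
    by (rule mv_index[OF kron_mat_carrier[OF A B] kron_carrier[OF u w] r])
  also have "\<dots> = (\<Sum>k<a. \<Sum>l<b. kron_mat A B $$ (r,k*b+l) * kron_vec u w $ (k*b+l))"
    by (rule sum_split)
  also have "\<dots> = (\<Sum>k<a. \<Sum>l<b. (A $$ (i,k) * u $ k) * (B $$ (j,l) * w $ l))"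
  proof (rule sum.cong[OF refl], rule sum.cong[OF refl])
    fix k l assume k: "k \<in> {..<a}" and l: "l \<in> {..<b}"
    have e1: "kron_mat A B $$ (r,k*b+l) = A $$ (i,k) * B $$ (j,l)"
      unfolding rij using k l by (intro kron_mat_index[OF A B i j]) auto
    have e2: "kron_vec u w $ (k*b+l) = u $ k * w $ l" using k l by (intro kron_index[OF u w]) auto
    show "kron_mat A B $$ (r,k*b+l) * kron_vec u w $ (k*b+l) = (A $$ (i,k) * u $ k) * (B $$ (j,l) * w $ l)"
      unfolding e1 e2 by (simp add: mult_ac)
  qed
  also have "\<dots> = (\<Sum>k<a. A $$ (i,k) * u $ k) * (\<Sum>l<b. B $$ (j,l) * w $ l)"
    by (simp add: sum_product)
  also have "\<dots> = (A *\<^sub>v u) $ i * (B *\<^sub>v w) $ j" using mv_index[OF A u i] mv_index[OF B w j] by simp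
  also have "\<dots> = kron_vec (A *\<^sub>v u) (B *\<^sub>v w) $ r" unfolding rij by (rule kron_index[OF Au Bw i j, symmetric])
  finally show "(kron_mat A B *\<^sub>v kron_vec u w) $ r = kron_vec (A *\<^sub>v u) (B *\<^sub>v w) $ r" .
qed

lemma kron_smult: "kron_vec (c \<cdot>\<^sub>v u) (d \<cdot>\<^sub>v w) = (c * d) \<cdot>\<^sub>v kron_vec u w"
  unfolding kron_vec_def
proof (rule eq_vecI)
  fix i assume "i < dim_vec ((c * d) \<cdot>\<^sub>v vec (dim_vec u * dim_vec w) (\<lambda>j. u $ (j div dim_vec w) * w $ (j mod dim_vec w)))"
  hence i: "i < dim_vec u * dim_vec w" by simp
  hence w0: "dim_vec w > 0" by (cases "dim_vec w") auto
  have "i div dim_vec w < dim_vec u" using i by (simp add: less_mult_imp_div_less)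
  moreover have "i mod dim_vec w < dim_vec w" using w0 by simp
  ultimately show "vec (dim_vec (c \<cdot>\<^sub>v u) * dim_vec (d \<cdot>\<^sub>v w))
          (\<lambda>j. (c \<cdot>\<^sub>v u) $ (j div dim_vec (d \<cdot>\<^sub>v w)) * (d \<cdot>\<^sub>v w) $ (j mod dim_vec (d \<cdot>\<^sub>v w))) $ i =
         ((c * d) \<cdot>\<^sub>v vec (dim_vec u * dim_vec w) (\<lambda>j. u $ (j div dim_vec w) * w $ (j mod dim_vec w))) $ i"
    using i by (simp add: mult_ac)
qed simp

lemma mat_sum_OS:
  assumes bc: "\<forall>k<m. b k \<in> carrier_vec m"
  shows "mat_sum m {..<m} (\<lambda>k. complex_of_real (alpha k) \<cdot>\<^sub>m outer (b k) (b k))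
    = OS m {..<m} (\<lambda>k. complex_of_real (alpha k) \<cdot>\<^sub>v b k) b"
  by (rule eq_matI) (use bc in \<open>auto simp: mat_sum_def OS_def outer_def intro!: sum.cong\<close>)

lemma S_y_carrier: "S_y \<in> carrier_mat 2 2" unfolding S_y_def by simp

lemma diag_state_index: "k < N \<Longrightarrow> m < N \<Longrightarrow> diag_state N p $$ (k,m) = (if k = m then complex_of_real (p k) else 0)"
  unfolding diag_state_def by simp

lemma diag_state_carrier: "diag_state N p \<in> carrier_mat N N" unfolding diag_state_def by simp

lemma SLD_conj:
  assumes p_pos: "\<forall>n<N. p n > 0"
    and G_carrier: "G \<in> carrier_mat N N"
    and G_real: "\<forall>n<N. \<forall>m<N. G $$ (n, m) \<in> \<real>"
    and L_SLD: "is_SLD N G (diag_state N p) L"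
    and n: "n < N" and m: "m < N"
  shows "cnj (L $$ (n,m)) = - L $$ (n,m)"
proof -
  define \<rho> where "\<rho> = diag_state N p"
  have \<rho>: "\<rho> \<in> carrier_mat N N" unfolding \<rho>_def by (rule diag_state_carrier)
  have Lc: "L \<in> carrier_mat N N" and E: "(- \<i>) \<cdot>\<^sub>m (G * \<rho> - \<rho> * G) = (1/2 :: complex) \<cdot>\<^sub>m (\<rho> * L + L * \<rho>)"
    using L_SLD unfolding is_SLD_def \<rho>_def by auto
  have GR: "(G * \<rho>) $$ (n,m) = G $$ (n,m) * complex_of_real (p m)"
  proof -
    have "(G * \<rho>) $$ (n,m) = (\<Sum>k<N. G $$ (n,k) * \<rho> $$ (k,m))" by (rule mm_index[OF G_carrier \<rho> n m])
    also have "\<dots> = (\<Sum>k<N. if k = m then G $$ (n,m) * complex_of_real (p m) else 0)"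
      by (rule sum.cong) (use m in \<open>auto simp: \<rho>_def diag_state_index\<close>)
    also have "\<dots> = G $$ (n,m) * complex_of_real (p m)" using m by simp
    finally show ?thesis .
  qed
  have RG: "(\<rho> * G) $$ (n,m) = complex_of_real (p n) * G $$ (n,m)"
  proof -
    have "(\<rho> * G) $$ (n,m) = (\<Sum>k<N. \<rho> $$ (n,k) * G $$ (k,m))" by (rule mm_index[OF \<rho> G_carrier n m])
    also have "\<dots> = (\<Sum>k<N. if k = n then complex_of_real (p n) * G $$ (n,m) else 0)"
      by (rule sum.cong) (use n in \<open>auto simp: \<rho>_def diag_state_index\<close>)
    also have "\<dots> = complex_of_real (p n) * G $$ (n,m)" using n by simp
    finally show ?thesis .
  qed
  have LR: "(L * \<rho>) $$ (n,m) = L $$ (n,m) * complex_of_real (p m)"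
  proof -
    have "(L * \<rho>) $$ (n,m) = (\<Sum>k<N. L $$ (n,k) * \<rho> $$ (k,m))" by (rule mm_index[OF Lc \<rho> n m])
    also have "\<dots> = (\<Sum>k<N. if k = m then L $$ (n,m) * complex_of_real (p m) else 0)"
      by (rule sum.cong) (use m in \<open>auto simp: \<rho>_def diag_state_index\<close>)
    also have "\<dots> = L $$ (n,m) * complex_of_real (p m)" using m by simp
    finally show ?thesis .
  qed
  have RL: "(\<rho> * L) $$ (n,m) = complex_of_real (p n) * L $$ (n,m)"
  proof -
    have "(\<rho> * L) $$ (n,m) = (\<Sum>k<N. \<rho> $$ (n,k) * L $$ (k,m))" by (rule mm_index[OF \<rho> Lc n m])
    also have "\<dots> = (\<Sum>k<N. if k = n then complex_of_real (p n) * L $$ (n,m) else 0)"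
      by (rule sum.cong) (use n in \<open>auto simp: \<rho>_def diag_state_index\<close>)
    also have "\<dots> = complex_of_real (p n) * L $$ (n,m)" using n by simp
    finally show ?thesis .
  qed
  have "((- \<i>) \<cdot>\<^sub>m (G * \<rho> - \<rho> * G)) $$ (n,m) = ((1/2 :: complex) \<cdot>\<^sub>m (\<rho> * L + L * \<rho>)) $$ (n,m)"
    using E by simp
  hence E2: "(- \<i>) * (G $$ (n,m) * complex_of_real (p m) - complex_of_real (p n) * G $$ (n,m))
      = (1/2) * (complex_of_real (p n) * L $$ (n,m) + L $$ (n,m) * complex_of_real (p m))"
    using G_carrier \<rho> Lc n m GR RG LR RL by simp
  have GnmR: "G $$ (n,m) \<in> \<real>" using G_real n m by blast
  obtain g where g: "G $$ (n,m) = complex_of_real g" using GnmR by (rule Reals_cases)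
  define s where "s = (p n + p m) / 2"
  define t where "t = g * (p m - p n)"
  have pn: "p n > 0" and pm: "p m > 0" using p_pos n m by auto
  have s0: "s > 0" using pn pm unfolding s_def by simp
  have E3: "complex_of_real s * L $$ (n,m) = - \<i> * complex_of_real t"
    using E2 unfolding g s_def t_def by (simp add: algebra_simps)
  have "L $$ (n,m) = - \<i> * complex_of_real (t / s)"
  proof -
    have "L $$ (n,m) = (complex_of_real s * L $$ (n,m)) / complex_of_real s" using s0 by simp
    also have "\<dots> = - \<i> * complex_of_real (t / s)" unfolding E3 by (simp add: of_real_divide)
    finally show ?thesis .
  qed
  then show ?thesis by simp
qed

lemma conj_mult:
  assumes Lc: "L \<in> carrier_mat N N" and Lconj: "\<forall>n<N. \<forall>m<N. cnj (L $$ (n,m)) = - L $$ (n,m)"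
    and v: "(v::complex vec) \<in> carrier_vec N"
  shows "L *\<^sub>v conjugate v = - conjugate (L *\<^sub>v v)"
proof (rule eq_vecI)
  fix i assume "i < dim_vec (- conjugate (L *\<^sub>v v))"
  hence i: "i < N" using Lc by simp
  have "(L *\<^sub>v conjugate v) $ i = (\<Sum>k<N. L $$ (i,k) * cnj (v $ k))"
    using mv_index[OF Lc _ i, of "conjugate v"] v by auto
  also have "\<dots> = - cnj (\<Sum>k<N. L $$ (i,k) * v $ k)"
    using Lconj i by (simp add: sum_negf[symmetric])
  also have "\<dots> = (- conjugate (L *\<^sub>v v)) $ i"
    using mv_index[OF Lc v i] i Lc by simp
  finally show "(L *\<^sub>v conjugate v) $ i = (- conjugate (L *\<^sub>v v)) $ i" .
qed (use Lc in simp)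

lemma part32:
  fixes L :: "complex mat" and a :: "bool \<Rightarrow> nat \<Rightarrow> complex vec" and alpha :: "nat \<Rightarrow> real"
  assumes N2: "N = 2 * m" and Lc: "L \<in> carrier_mat N N"
    and aon: "orthonormal_fam N (\<lambda>(i,k). a i k) (UNIV \<times> {..<m})"
    and aev: "\<forall>k<m. L *\<^sub>v a True k = complex_of_real (alpha k) \<cdot>\<^sub>v a True k \<and>
        L *\<^sub>v a False k = complex_of_real (- alpha k) \<cdot>\<^sub>v a False k"
    and eon: "orthonormal_fam 2 e UNIV"
    and eT: "S_y *\<^sub>v e True = e True" and eF: "S_y *\<^sub>v e False = - e False"
    and bon: "orthonormal_fam m b {..<m}"
  shows "(\<exists>V. V \<in> carrier_mat N N \<and> (\<forall>i. \<forall>k<m. V *\<^sub>v a i k = kron_vec (e i) (b k))) \<and>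
        (\<forall>V. V \<in> carrier_mat N N \<and> (\<forall>i. \<forall>k<m. V *\<^sub>v a i k = kron_vec (e i) (b k)) \<longrightarrow>
              unitary_mat N V \<and>
              V * L * mat_adjoint V =
                kron_mat S_y (mat_sum m {..<m}
                   (\<lambda>k. complex_of_real (alpha k) \<cdot>\<^sub>m outer (b k) (b k))))"
proof -
  define I where "I = (UNIV :: bool set) \<times> {..<m}"
  define av where "av = (\<lambda>(i,k). a i k)"
  define fv where "fv = (\<lambda>(i::bool,k). kron_vec (e i) (b k))"
  have fin: "finite I" unfolding I_def by simp
  have card: "card I = N" unfolding I_def N2 by (simp add: card_cartesian_product)
  have ec: "e i \<in> carrier_vec 2" for i using eon unfolding orthonormal_fam_def by auto
  have bc: "\<forall>k<m. b k \<in> carrier_vec m" using bon unfolding orthonormal_fam_def by auto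
  have avc: "\<forall>x\<in>I. av x \<in> carrier_vec N" using aon unfolding orthonormal_fam_def I_def av_def by auto
  have avon: "\<forall>x\<in>I. \<forall>y\<in>I. av y \<bullet>c av x = (if x = y then 1 else 0)"
    using aon unfolding orthonormal_fam_def I_def av_def by auto
  have fvc: "\<forall>x\<in>I. fv x \<in> carrier_vec N"
    using kron_carrier[OF ec] bc unfolding I_def fv_def N2 by auto
  have fvon: "\<forall>x\<in>I. \<forall>y\<in>I. fv y \<bullet>c fv x = (if x = y then 1 else 0)"
  proof (intro ballI)
    fix x y assume x: "x \<in> I" and y: "y \<in> I"
    obtain i k where xik: "x = (i,k)" and k: "k < m" using x unfolding I_def by auto
    obtain i' k' where yik: "y = (i',k')" and k': "k' < m" using y unfolding I_def by auto
    have "fv y \<bullet>c fv x = (e i' \<bullet>c e i) * (b k' \<bullet>c b k)"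
      unfolding xik yik fv_def using kron_cprod[OF ec ec, of "b k'" m "b k"] bc k k' by simp
    also have "\<dots> = (if x = y then 1 else 0)"
      using eon bon k k' unfolding orthonormal_fam_def xik yik by auto
    finally show "fv y \<bullet>c fv x = (if x = y then 1 else 0)" .
  qed
  define V0 where "V0 = OS N I fv av"
  have V0c: "V0 \<in> carrier_mat N N" unfolding V0_def by (rule OS_carrier)
  have V0a: "V0 *\<^sub>v av x = fv x" if "x \<in> I" for x
    unfolding V0_def by (rule OS_basis[OF fin avc fvc avon that])
  have V0Hf: "mat_adjoint V0 *\<^sub>v fv x = av x" if "x \<in> I" for x
    unfolding V0_def OS_adj by (rule OS_basis[OF fin fvc avc fvon that])
  have V0H: "mat_adjoint V0 \<in> carrier_mat N N" using V0c by simp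
  have ex: "\<exists>V. V \<in> carrier_mat N N \<and> (\<forall>i. \<forall>k<m. V *\<^sub>v a i k = kron_vec (e i) (b k))"
    using V0c V0a unfolding I_def av_def fv_def by auto
  have uni: "unitary_mat N V0"
    unfolding unitary_mat_def
  proof (intro conjI V0c)
    show "mat_adjoint V0 * V0 = 1\<^sub>m N"
    proof (rule onb_ext[OF fin card avc avon])
      show "\<forall>x\<in>I. (mat_adjoint V0 * V0) *\<^sub>v av x = 1\<^sub>m N *\<^sub>v av x"
      proof
        fix x assume x: "x \<in> I"
        have "(mat_adjoint V0 * V0) *\<^sub>v av x = mat_adjoint V0 *\<^sub>v (V0 *\<^sub>v av x)"
          by (rule assoc_mult_mat_vec[OF V0H V0c]) (use avc x in auto)
        also have "\<dots> = av x" using V0a[OF x] V0Hf[OF x] by simp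
        also have "\<dots> = 1\<^sub>m N *\<^sub>v av x" using avc x by simp
        finally show "(mat_adjoint V0 * V0) *\<^sub>v av x = 1\<^sub>m N *\<^sub>v av x" .
      qed
    qed (use V0c in auto)
    show "V0 * mat_adjoint V0 = 1\<^sub>m N"
    proof (rule onb_ext[OF fin card fvc fvon])
      show "\<forall>x\<in>I. (V0 * mat_adjoint V0) *\<^sub>v fv x = 1\<^sub>m N *\<^sub>v fv x"
      proof
        fix x assume x: "x \<in> I"
        have "(V0 * mat_adjoint V0) *\<^sub>v fv x = V0 *\<^sub>v (mat_adjoint V0 *\<^sub>v fv x)"
          by (rule assoc_mult_mat_vec[OF V0c V0H]) (use fvc x in auto)
        also have "\<dots> = fv x" using V0a[OF x] V0Hf[OF x] by simp
        also have "\<dots> = 1\<^sub>m N *\<^sub>v fv x" using fvc x by simp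
        finally show "(V0 * mat_adjoint V0) *\<^sub>v fv x = 1\<^sub>m N *\<^sub>v fv x" .
      qed
    qed (use V0c in auto)
  qed
  define M where "M = mat_sum m {..<m} (\<lambda>k. complex_of_real (alpha k) \<cdot>\<^sub>m outer (b k) (b k))"
  have MOS: "M = OS m {..<m} (\<lambda>k. complex_of_real (alpha k) \<cdot>\<^sub>v b k) b"
    unfolding M_def by (rule mat_sum_OS[OF bc])
  have Mc: "M \<in> carrier_mat m m" unfolding MOS by (rule OS_carrier)
  have Mb: "M *\<^sub>v b k = complex_of_real (alpha k) \<cdot>\<^sub>v b k" if k: "k < m" for k
    unfolding MOS
    by (rule OS_basis) (use bc bon k in \<open>auto simp: orthonormal_fam_def\<close>)
  define K where "K = kron_mat S_y M"
  have Kc: "K \<in> carrier_mat N N" unfolding K_def N2 by (rule kron_mat_carrier[OF S_y_carrier Mc])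
  have conj: "V0 * L * mat_adjoint V0 = K"
  proof (rule onb_ext[OF fin card fvc fvon])
    show "V0 * L * mat_adjoint V0 \<in> carrier_mat N N" by (rule mult_carrier_mat[OF mult_carrier_mat[OF V0c Lc] V0H])
    show "K \<in> carrier_mat N N" by (rule Kc)
    show "\<forall>x\<in>I. (V0 * L * mat_adjoint V0) *\<^sub>v fv x = K *\<^sub>v fv x"
    proof
      fix x assume x: "x \<in> I"
      obtain i k where xik: "x = (i,k)" and k: "k < m" using x unfolding I_def by auto
      define c where "c = (if i then complex_of_real (alpha k) else complex_of_real (- alpha k))"
      have La: "L *\<^sub>v av x = c \<cdot>\<^sub>v av x" using aev k unfolding xik av_def c_def by (cases i) auto
      have fx: "fv x \<in> carrier_vec N" using fvc x by auto
      have "(V0 * L * mat_adjoint V0) *\<^sub>v fv x = (V0 * L) *\<^sub>v (mat_adjoint V0 *\<^sub>v fv x)"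
        by (rule assoc_mult_mat_vec[OF mult_carrier_mat[OF V0c Lc] V0H fx])
      also have "\<dots> = V0 *\<^sub>v (L *\<^sub>v (mat_adjoint V0 *\<^sub>v fv x))"
        by (rule assoc_mult_mat_vec[OF V0c Lc mult_mat_vec_carrier[OF V0H fx]])
      also have "\<dots> = V0 *\<^sub>v (c \<cdot>\<^sub>v av x)" unfolding V0Hf[OF x] La ..
      also have "\<dots> = c \<cdot>\<^sub>v fv x" using mult_mat_vec[OF V0c] avc x V0a[OF x] by simp
      also have "\<dots> = K *\<^sub>v fv x"
      proof -
        have "K *\<^sub>v fv x = kron_vec (S_y *\<^sub>v e i) (M *\<^sub>v b k)"
          unfolding K_def xik fv_def using kron_mat_vec[OF S_y_carrier Mc ec] bc k by simp
        also have "\<dots> = kron_vec ((if i then 1 else -1) \<cdot>\<^sub>v e i) (complex_of_real (alpha k) \<cdot>\<^sub>v b k)"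
        proof -
          have "- e False = (-1) \<cdot>\<^sub>v e False" by (rule eq_vecI) auto
          then show ?thesis using eT eF Mb[OF k] by (cases i) auto
        qed
        also have "\<dots> = c \<cdot>\<^sub>v fv x" unfolding kron_smult xik fv_def c_def by (cases i) auto
        finally show ?thesis by simp
      qed
      finally show "(V0 * L * mat_adjoint V0) *\<^sub>v fv x = K *\<^sub>v fv x" .
    qed
  qed
  have all: "\<forall>V. V \<in> carrier_mat N N \<and> (\<forall>i. \<forall>k<m. V *\<^sub>v a i k = kron_vec (e i) (b k)) \<longrightarrow>
              unitary_mat N V \<and> V * L * mat_adjoint V = K"
  proof (intro allI impI)
    fix V assume V: "V \<in> carrier_mat N N \<and> (\<forall>i. \<forall>k<m. V *\<^sub>v a i k = kron_vec (e i) (b k))"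
    have "V = V0"
    proof (rule onb_ext[OF fin card avc avon])
      show "\<forall>x\<in>I. V *\<^sub>v av x = V0 *\<^sub>v av x" using V V0a unfolding I_def av_def fv_def by auto
    qed (use V V0c in auto)
    then show "unitary_mat N V \<and> V * L * mat_adjoint V = K" using uni conj by simp
  qed
  show ?thesis using ex all unfolding K_def M_def by blast
qed

lemma part31:
  fixes N :: nat and p :: "nat \<Rightarrow> real" and G L :: "complex mat"
  assumes p_pos: "\<forall>n<N. p n > 0"
    and G_carrier: "G \<in> carrier_mat N N"
    and G_real: "\<forall>n<N. \<forall>m<N. G $$ (n, m) \<in> \<real>"
    and L_SLD: "is_SLD N G (diag_state N p) L"
    and L_full_rank: "invertible_mat L"
  shows "\<exists>(alpha :: nat \<Rightarrow> real) (a :: bool \<Rightarrow> nat \<Rightarrow> complex vec). N = 2 * (N div 2) \<and>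
     orthonormal_fam N (\<lambda>(i,k). a i k) (UNIV \<times> {..<N div 2}) \<and>
     (\<forall>k<N div 2. alpha k \<noteq> 0 \<and>
        L *\<^sub>v a True k = complex_of_real (alpha k) \<cdot>\<^sub>v a True k \<and>
        L *\<^sub>v a False k = complex_of_real (- alpha k) \<cdot>\<^sub>v a False k)"
proof -
  have Lc: "L \<in> carrier_mat N N" and Lh: "mat_adjoint L = L" using L_SLD unfolding is_SLD_def by auto
  have Lconj: "\<forall>n<N. \<forall>m<N. cnj (L $$ (n,m)) = - L $$ (n,m)"
    using SLD_conj[OF p_pos G_carrier G_real L_SLD] by blast
  obtain vs d where vsc: "\<forall>j<N. vs j \<in> carrier_vec N" and ev: "\<forall>j<N. L *\<^sub>v vs j = d j \<cdot>\<^sub>v vs j"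
    and von: "\<forall>i<N. \<forall>j<N. vs j \<bullet>c vs i = (if i = j then 1 else 0)"
    using spectral[OF Lc Lh] by blast
  define r where "r j = Re (d j)" for j
  have dreal: "d j = complex_of_real (r j)" if j: "j < N" for j
  proof -
    have vj: "vs j \<in> carrier_vec N" using vsc j by auto
    have "d j = (L *\<^sub>v vs j) \<bullet>c vs j"
      using ev j von j smult_cprod_l[OF vj vj, of "d j"] by simp
    also have "\<dots> = vs j \<bullet>c (L *\<^sub>v vs j)" by (rule herm_cprod[OF Lc Lh vj vj])
    also have "\<dots> = cnj (d j)" using ev j von j cprod_smult_r[OF vj vj, of "d j"] by simp
    finally have "d j = cnj (d j)" .
    hence "Im (d j) = 0" by (metis cnj.simps(2) neg_equal_zero)
    thus ?thesis unfolding r_def by (simp add: complex_eq_iff)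
  qed
  have evr: "L *\<^sub>v vs j = complex_of_real (r j) \<cdot>\<^sub>v vs j" if "j < N" for j
    using ev dreal that by simp
  obtain B where BL: "B * L = 1\<^sub>m N" and Bc: "B \<in> carrier_mat N N"
  proof -
    from L_full_rank obtain B where i1: "inverts_mat L B" and i2: "inverts_mat B L"
      unfolding invertible_mat_def by blast
    have "L * B = 1\<^sub>m N" using i1 Lc unfolding inverts_mat_def by auto
    hence cB: "dim_col B = N" by (metis index_mult_mat(3) index_one_mat(3))
    have BL': "B * L = 1\<^sub>m (dim_row B)" using i2 unfolding inverts_mat_def by auto
    have rB: "dim_row B = N"
      using arg_cong[OF BL', of dim_col] Lc by auto
    from BL' rB show ?thesis using that cB by (auto intro!: carrier_matI)
  qed
  have rnz: "r j \<noteq> 0" if j: "j < N" for j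
  proof
    assume r0: "r j = 0"
    have vj: "vs j \<in> carrier_vec N" using vsc j by auto
    have "vs j = (B * L) *\<^sub>v vs j" using BL vj by simp
    also have "\<dots> = B *\<^sub>v (L *\<^sub>v vs j)" by (rule assoc_mult_mat_vec[OF Bc Lc vj])
    also have "L *\<^sub>v vs j = 0\<^sub>v N" using evr[OF j] r0 vj by auto
    finally have "vs j = 0\<^sub>v N" using Bc by auto
    hence "vs j \<bullet>c vs j = 0" by simp
    thus False using von j by simp
  qed
  have cev: "L *\<^sub>v conjugate (vs j) = complex_of_real (- r j) \<cdot>\<^sub>v conjugate (vs j)" if j: "j < N" for j
  proof -
    have vj: "vs j \<in> carrier_vec N" using vsc j by auto
    have "L *\<^sub>v conjugate (vs j) = - conjugate (L *\<^sub>v vs j)" by (rule conj_mult[OF Lc Lconj vj])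
    also have "\<dots> = complex_of_real (- r j) \<cdot>\<^sub>v conjugate (vs j)"
      unfolding evr[OF j] by (rule eq_vecI) (use vj in auto)
    finally show ?thesis .
  qed
  have cvc: "\<forall>j<N. conjugate (vs j) \<in> carrier_vec N" using vsc by auto
  have cvon: "\<forall>i<N. \<forall>j<N. conjugate (vs j) \<bullet>c conjugate (vs i) = (if i = j then 1 else 0)"
  proof (intro allI impI)
    fix i j assume i: "i < N" and j: "j < N"
    have "conjugate (vs j) \<bullet>c conjugate (vs i) = cnj (vs j \<bullet>c vs i)"
      by (rule conj_cprod_conj) (use vsc i j in auto)
    then show "conjugate (vs j) \<bullet>c conjugate (vs i) = (if i = j then 1 else 0)" using von i j by simp
  qed
  have orth: "vs j \<bullet>c conjugate (vs k) = 0" if "j < N" "k < N" "r j \<noteq> - r k" for j k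
    by (rule eig_orth[OF Lc Lh _ _ evr[OF that(1)] cev[OF that(2)] that(3)]) (use vsc cvc that in auto)
  define P where "P = {j. j < N \<and> r j > 0}"
  define Q where "Q = {j. j < N \<and> r j < 0}"
  define T where "T j k = vs j \<bullet>c conjugate (vs k)" for j k
  define sq where "sq z = z * cnj z" for z :: complex
  have row: "(\<Sum>k<N. sq (T j k)) = 1" if j: "j < N" for j
    using parseval[OF cvc cvon, of "vs j"] vsc von j unfolding sq_def T_def by auto
  have col: "(\<Sum>j<N. sq (T j k)) = 1" if k: "k < N" for k
  proof -
    have "(\<Sum>j<N. sq (T j k)) = (\<Sum>j<N. sq (conjugate (vs k) \<bullet>c vs j))"
    proof (rule sum.cong[OF refl])
      fix j assume "j \<in> {..<N}"
      hence "T j k = cnj (conjugate (vs k) \<bullet>c vs j)"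
        unfolding T_def using cnj_cprod[of "conjugate (vs k)" N "vs j"] vsc cvc k by auto
      thus "sq (T j k) = sq (conjugate (vs k) \<bullet>c vs j)" unfolding sq_def by simp
    qed
    also have "\<dots> = 1" using parseval[OF vsc von, of "conjugate (vs k)"] cvc cvon k unfolding sq_def by auto
    finally show ?thesis .
  qed
  have finP: "finite P" and finQ: "finite Q" unfolding P_def Q_def by auto
  have "of_nat (card P) = (\<Sum>j\<in>P. \<Sum>k<N. sq (T j k))"
    using row unfolding P_def by simp
  also have "\<dots> = (\<Sum>j\<in>P. \<Sum>k\<in>Q. sq (T j k))"
  proof (rule sum.cong[OF refl])
    fix j assume j: "j \<in> P"
    show "(\<Sum>k<N. sq (T j k)) = (\<Sum>k\<in>Q. sq (T j k))"
    proof (rule sum.mono_neutral_right)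
      show "\<forall>k\<in>{..<N} - Q. sq (T j k) = 0"
      proof
        fix k assume k: "k \<in> {..<N} - Q"
        hence "r k > 0" using rnz[of k] unfolding Q_def by force
        thus "sq (T j k) = 0" using j k orth[of j k] unfolding P_def T_def sq_def by auto
      qed
    qed (auto simp: Q_def)
  qed
  also have "\<dots> = (\<Sum>k\<in>Q. \<Sum>j\<in>P. sq (T j k))" by (rule sum.swap)
  also have "\<dots> = (\<Sum>k\<in>Q. \<Sum>j<N. sq (T j k))"
  proof (rule sum.cong[OF refl])
    fix k assume k: "k \<in> Q"
    show "(\<Sum>j\<in>P. sq (T j k)) = (\<Sum>j<N. sq (T j k))"
    proof (rule sum.mono_neutral_left)
      show "\<forall>j\<in>{..<N} - P. sq (T j k) = 0"
      proof
        fix j assume j: "j \<in> {..<N} - P"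
        hence "r j < 0" using rnz[of j] unfolding P_def by force
        thus "sq (T j k) = 0" using j k orth[of j k] unfolding Q_def T_def sq_def by auto
      qed
    qed (auto simp: P_def)
  qed
  also have "\<dots> = of_nat (card Q)" using col unfolding Q_def by simp
  finally have "(of_nat (card P) :: complex) = of_nat (card Q)" .
  hence cPQ: "card P = card Q" using of_nat_eq_iff by blast
  have "P \<union> Q = {..<N}" using rnz unfolding P_def Q_def by force
  moreover have "P \<inter> Q = {}" unfolding P_def Q_def by auto
  ultimately have "card P + card Q = N" using card_Un_disjoint[OF finP finQ] by simp
  hence N2: "N = 2 * card P" and cP: "card P = N div 2" using cPQ by auto
  obtain h where h: "bij_betw h {0..<N div 2} P" using ex_bij_betw_nat_finite[OF finP] cP by auto
  have hP: "k < N div 2 \<Longrightarrow> h k \<in> P" for k using h by (auto simp: bij_betw_def)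
  have hN: "k < N div 2 \<Longrightarrow> h k < N" for k using hP unfolding P_def by auto
  have hr: "k < N div 2 \<Longrightarrow> r (h k) > 0" for k using hP unfolding P_def by auto
  have hinj: "k < N div 2 \<Longrightarrow> l < N div 2 \<Longrightarrow> h k = h l \<Longrightarrow> k = l" for k l
    using h by (auto simp: bij_betw_def inj_on_def)
  define alpha where "alpha k = r (h k)" for k
  define a where "a i k = (if i then vs (h k) else conjugate (vs (h k)))" for i k
  have on: "orthonormal_fam N (\<lambda>(i,k). a i k) (UNIV \<times> {..<N div 2})"
    unfolding orthonormal_fam_def
  proof (intro conjI ballI)
    fix x assume "x \<in> (UNIV :: bool set) \<times> {..<N div 2}"
    then obtain i k where x: "x = (i,k)" and k: "k < N div 2" by auto
    show "(case x of (i,k) \<Rightarrow> a i k) \<in> carrier_vec N" using x vsc cvc hN[OF k] by (auto simp: a_def)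
  next
    fix x y assume "x \<in> (UNIV :: bool set) \<times> {..<N div 2}" "y \<in> (UNIV :: bool set) \<times> {..<N div 2}"
    then obtain i k i' k' where x: "x = (i,k)" and k: "k < N div 2" and y: "y = (i',k')" and k': "k' < N div 2" by auto
    have hk: "h k < N" and hk': "h k' < N" using hN k k' by auto
    have eq: "(h k = h k') = (k = k')" using hinj k k' by auto
    show "(case y of (i,k) \<Rightarrow> a i k) \<bullet>c (case x of (i,k) \<Rightarrow> a i k) = (if x = y then 1 else 0)"
    proof (cases i; cases i')
      assume "i" "i'" then show ?thesis using von hk hk' eq x y by (auto simp: a_def)
    next
      assume "\<not> i" "\<not> i'" then show ?thesis using cvon hk hk' eq x y by (auto simp: a_def)
    next
      assume i: "i" and i': "\<not> i'"
      have "conjugate (vs (h k')) \<bullet>c vs (h k) = cnj (vs (h k) \<bullet>c conjugate (vs (h k')))"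
        using cnj_cprod[of "vs (h k)" N "conjugate (vs (h k'))"] vsc cvc hk hk' by auto
      also have "vs (h k) \<bullet>c conjugate (vs (h k')) = 0"
        using orth[OF hk hk'] hr[OF k] hr[OF k'] by auto
      finally show ?thesis using i i' x y by (auto simp: a_def)
    next
      assume i: "\<not> i" and i': "i'"
      show ?thesis using orth[OF hk' hk] hr[OF k] hr[OF k'] i i' x y by (auto simp: a_def)
    qed
  qed
  have eig: "\<forall>k<N div 2. alpha k \<noteq> 0 \<and>
        L *\<^sub>v a True k = complex_of_real (alpha k) \<cdot>\<^sub>v a True k \<and>
        L *\<^sub>v a False k = complex_of_real (- alpha k) \<cdot>\<^sub>v a False k"
  proof (intro allI impI conjI)
    fix k assume k: "k < N div 2"
    show "alpha k \<noteq> 0" using hr[OF k] unfolding alpha_def by simp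
    show "L *\<^sub>v a True k = complex_of_real (alpha k) \<cdot>\<^sub>v a True k"
      using evr[OF hN[OF k]] unfolding alpha_def a_def by simp
    show "L *\<^sub>v a False k = complex_of_real (- alpha k) \<cdot>\<^sub>v a False k"
      using cev[OF hN[OF k]] unfolding alpha_def a_def by simp
  qed
  show ?thesis using N2 cP on eig by metis
qed

theorem proposition3:
  fixes N :: nat and p :: "nat \<Rightarrow> real" and G L :: "complex mat"
  assumes N_even: "even N"
    and p_pos: "\<forall>n<N. p n > 0"
    and p_sum: "(\<Sum>n<N. p n) = 1"
    and G_carrier: "G \<in> carrier_mat N N"
    and G_herm: "mat_adjoint G = G"
    and G_real: "\<forall>n<N. \<forall>m<N. G $$ (n, m) \<in> \<real>"
    and L_SLD: "is_SLD N G (diag_state N p) L"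
    and L_full_rank: "invertible_mat L"
  shows "\<exists>(alpha :: nat \<Rightarrow> real) (a :: bool \<Rightarrow> nat \<Rightarrow> complex vec).
     \<comment> \<open>(3.1): a True k = |alpha_{+,k}>, a False k = |alpha_{-,k}>, k = 0..N/2-1\<close>
     orthonormal_fam N (\<lambda>(i,k). a i k) (UNIV \<times> {..<N div 2}) \<and>
     (\<forall>k<N div 2. alpha k \<noteq> 0 \<and>
        L *\<^sub>v a True k = complex_of_real (alpha k) \<cdot>\<^sub>v a True k \<and>
        L *\<^sub>v a False k = complex_of_real (- alpha k) \<cdot>\<^sub>v a False k) \<and>
     \<comment> \<open>(3.2): for any eigenbasis |+>,|-> of S_y and any orthonormal basis |k> of C^(N/2)\<close>
     (\<forall>(e :: bool \<Rightarrow> complex vec) (b :: nat \<Rightarrow> complex vec).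
        orthonormal_fam 2 e UNIV \<and>
        S_y *\<^sub>v e True = e True \<and> S_y *\<^sub>v e False = - e False \<and>
        orthonormal_fam (N div 2) b {..<N div 2} \<longrightarrow>
        (\<exists>V. V \<in> carrier_mat N N \<and>
              (\<forall>i. \<forall>k<N div 2. V *\<^sub>v a i k = kron_vec (e i) (b k))) \<and>
        (\<forall>V. V \<in> carrier_mat N N \<and>
              (\<forall>i. \<forall>k<N div 2. V *\<^sub>v a i k = kron_vec (e i) (b k)) \<longrightarrow>
              unitary_mat N V \<and>
              V * L * mat_adjoint V =
                kron_mat S_y (mat_sum (N div 2) {..<N div 2}
                   (\<lambda>k. complex_of_real (alpha k) \<cdot>\<^sub>m outer (b k) (b k)))))"
proof -
  have Lc: "L \<in> carrier_mat N N" using L_SLD unfolding is_SLD_def by auto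
  obtain alpha :: "nat \<Rightarrow> real" and a :: "bool \<Rightarrow> nat \<Rightarrow> complex vec" where
    N2: "N = 2 * (N div 2)" and on: "orthonormal_fam N (\<lambda>(i,k). a i k) (UNIV \<times> {..<N div 2})"
    and eig: "\<forall>k<N div 2. alpha k \<noteq> 0 \<and>
        L *\<^sub>v a True k = complex_of_real (alpha k) \<cdot>\<^sub>v a True k \<and>
        L *\<^sub>v a False k = complex_of_real (- alpha k) \<cdot>\<^sub>v a False k"
    using part31[OF p_pos G_carrier G_real L_SLD L_full_rank] by blast
  have eig2: "\<forall>k<N div 2. L *\<^sub>v a True k = complex_of_real (alpha k) \<cdot>\<^sub>v a True k \<and>
        L *\<^sub>v a False k = complex_of_real (- alpha k) \<cdot>\<^sub>v a False k" using eig by blast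
  show ?thesis
    apply (rule exI[of _ alpha], rule exI[of _ a])
    using on eig part32[OF N2 Lc on eig2] by blast
qed

end
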